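(* Consider (CVOP) and its associated convex projection (Pv): compute $Y_a=\operatorname{proj}_y[S_a]$ with $S_a=\{(x,y):x\in\mathcal{X},y\in\Gamma(x)+C\}$. (1) If $\bar X\subseteq\mathcal{X}$ is an infimizer of (CVOP), then $\bar S:=\{(x,y):x\in\bar X,\ y\in\Gamma(x)+C\}$ is a solution of (Pv). (2) If (CVOP) is self-bounded, then (Pv) is self-bounded. If, additionally, (CVOP) is bounded, then $(\operatorname{cl}Y_a)_\infty=\operatorname{cl}C$. (3) Let (CVOP) be bounded or self-bounded and let $\bar X\subseteq\mathcal{X}$ be a finite $\epsilon$-infimizer of (CVOP). Then $\bar S:=\{(x,\Gamma(x)):x\in\bar X\}$ is a finite $\epsilon$-solution of (Pv).
   Context: (CVOP): $\min\Gamma(x)$ w.r.t. $\le_C$ s.t. $x\in\mathcal{X}$, with $C\subseteq\mathbb{R}^m$ a non-trivial pointed solid convex cone, $\mathcal{X}\subseteq\mathbb{R}^n$ convex, $\Gamma$ $C$-convex; upper image $\mathcal{G}=\operatorname{cl}(\Gamma[\mathcal{X}]+C)$. Recession cone $A_\infty=\{y:x+\lambda y\in A\ \forall x\in A,\lambda\ge0\}$. Fix a $p$-norm with closed balls $B_\epsilon$, a direction $c\in\operatorname{int}C$ with $\|c\|=1$ and $\epsilon>0$. (CVOP) is bounded if $\mathcal{G}\subseteq\{q\}+C$ for some $q$; self-bounded if $\mathcal{G}\ne\mathbb{R}^m$ and $\mathcal{G}\subseteq\{q\}+\mathcal{G}_\infty$ for some $q$. $\bar X\subseteq\mathcal{X}$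 is an infimizer if $\mathcal{G}=\operatorname{cl}\operatorname{conv}(\Gamma[\bar X]+C)$. A nonempty finite $\bar X\subseteq\mathcal{X}$ is a finite $\epsilon$-infimizer if $\mathcal{G}\subseteq\operatorname{conv}\Gamma[\bar X]+C-\epsilon\{c\}$ (bounded case), resp. $\mathcal{G}\subseteq\operatorname{conv}\Gamma[\bar X]+\mathcal{G}_\infty-\epsilon\{c\}$ (self-bounded case). For the projection (Pv): a set $\bar S\subseteq S_a$ is a solution if $Y_a\subseteq\operatorname{cl}\operatorname{conv}\operatorname{proj}_y[\bar S]$; (Pv) is self-bounded if $Y_a\ne\mathbb{R}^m$ and $Y_a\subseteq\operatorname{conv}\{y^{(1)},\dots,y^{(k)}\}+(\operatorname{cl}Y_a)_\infty$ for finitely many points; for self-bounded (Pv), a nonempty finite $\bar S\subseteq S_a$ is a finite $\epsilon$-solution if $Y_a\subseteq\operatorname{conv}\operatorname{proj}_y[\bar S]+(\operatorname{cl}Y_a)_\infty+B_\epsilon$. *)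

theory Defs
  imports "HOL-Analysis.Analysis"
begin

definition msum :: "'a::real_vector set \<Rightarrow> 'a set \<Rightarrow> 'a set" where
  "msum A B = {a + b | a b. a \<in> A \<and> b \<in> B}"

definition recc :: "'a::real_vector set \<Rightarrow> 'a set" where
  "recc A = {y. \<forall>x\<in>A. \<forall>l::real. l \<ge> 0 \<longrightarrow> x + l *\<^sub>R y \<in> A}"

definition pnorm :: "ereal \<Rightarrow> real^'m \<Rightarrow> real" where
  "pnorm p y = (if p = \<infinity> then Max (range (\<lambda>i. \<bar>y $ i\<bar>))
                else (\<Sum>i\<in>UNIV. \<bar>y $ i\<bar> powr real_of_ereal p) powr (1 / real_of_ereal p))"

definition pball :: "ereal \<Rightarrow> real \<Rightarrow> (real^'m) set" where
  "pball p e = {y. pnorm p y \<le> e}"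

definition ordering_cone :: "(real^'m) set \<Rightarrow> bool" where
  "ordering_cone C \<longleftrightarrow> convex_cone C \<and> C \<noteq> {0} \<and> C \<noteq> UNIV
     \<and> C \<inter> uminus ` C = {0} \<and> interior C \<noteq> {}"

definition C_convex :: "(real^'m) set \<Rightarrow> (real^'n) set \<Rightarrow> (real^'n \<Rightarrow> real^'m) \<Rightarrow> bool" where
  "C_convex C X \<Gamma> \<longleftrightarrow> (\<forall>x\<in>X. \<forall>x'\<in>X. \<forall>l::real. 0 \<le> l \<and> l \<le> 1 \<longrightarrow>
      l *\<^sub>R \<Gamma> x + (1 - l) *\<^sub>R \<Gamma> x' - \<Gamma> (l *\<^sub>R x + (1 - l) *\<^sub>R x') \<in> C)"

definition upper_image :: "(real^'m) set \<Rightarrow> (real^'n) set \<Rightarrow> (real^'n \<Rightarrow> real^'m) \<Rightarrow> (real^'m) set" where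
  "upper_image C X \<Gamma> = closure (msum (\<Gamma> ` X) C)"

definition cvop_bounded :: "(real^'m) set \<Rightarrow> (real^'n) set \<Rightarrow> (real^'n \<Rightarrow> real^'m) \<Rightarrow> bool" where
  "cvop_bounded C X \<Gamma> \<longleftrightarrow> (\<exists>q. upper_image C X \<Gamma> \<subseteq> msum {q} C)"

definition cvop_self_bounded :: "(real^'m) set \<Rightarrow> (real^'n) set \<Rightarrow> (real^'n \<Rightarrow> real^'m) \<Rightarrow> bool" where
  "cvop_self_bounded C X \<Gamma> \<longleftrightarrow> upper_image C X \<Gamma> \<noteq> UNIV \<and>
     (\<exists>q. upper_image C X \<Gamma> \<subseteq> msum {q} (recc (upper_image C X \<Gamma>)))"

definition infimizer :: "(real^'m) set \<Rightarrow> (real^'n) set \<Rightarrow> (real^'n \<Rightarrow> real^'m) \<Rightarrow> (real^'n) set \<Rightarrow> bool" where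
  "infimizer C X \<Gamma> Xb \<longleftrightarrow> Xb \<subseteq> X \<and>
     upper_image C X \<Gamma> = closure (convex hull (msum (\<Gamma> ` Xb) C))"

definition fin_eps_infimizer_b :: "(real^'m) set \<Rightarrow> (real^'n) set \<Rightarrow> (real^'n \<Rightarrow> real^'m)
    \<Rightarrow> real^'m \<Rightarrow> real \<Rightarrow> (real^'n) set \<Rightarrow> bool" where
  "fin_eps_infimizer_b C X \<Gamma> c e Xb \<longleftrightarrow> Xb \<noteq> {} \<and> finite Xb \<and> Xb \<subseteq> X \<and>
     upper_image C X \<Gamma> \<subseteq> msum (msum (convex hull (\<Gamma> ` Xb)) C) {- e *\<^sub>R c}"

definition fin_eps_infimizer_sb :: "(real^'m) set \<Rightarrow> (real^'n) set \<Rightarrow> (real^'n \<Rightarrow> real^'m)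
    \<Rightarrow> real^'m \<Rightarrow> real \<Rightarrow> (real^'n) set \<Rightarrow> bool" where
  "fin_eps_infimizer_sb C X \<Gamma> c e Xb \<longleftrightarrow> Xb \<noteq> {} \<and> finite Xb \<and> Xb \<subseteq> X \<and>
     upper_image C X \<Gamma> \<subseteq>
       msum (msum (convex hull (\<Gamma> ` Xb)) (recc (upper_image C X \<Gamma>))) {- e *\<^sub>R c}"

definition S_a :: "(real^'m) set \<Rightarrow> (real^'n) set \<Rightarrow> (real^'n \<Rightarrow> real^'m) \<Rightarrow> ((real^'n) \<times> (real^'m)) set" where
  "S_a C X \<Gamma> = {(x, y). x \<in> X \<and> y \<in> msum {\<Gamma> x} C}"

definition Y_a :: "(real^'m) set \<Rightarrow> (real^'n) set \<Rightarrow> (real^'n \<Rightarrow> real^'m) \<Rightarrow> (real^'m) set" where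
  "Y_a C X \<Gamma> = snd ` S_a C X \<Gamma>"

definition pv_solution :: "(real^'m) set \<Rightarrow> (real^'n) set \<Rightarrow> (real^'n \<Rightarrow> real^'m)
    \<Rightarrow> ((real^'n) \<times> (real^'m)) set \<Rightarrow> bool" where
  "pv_solution C X \<Gamma> Sb \<longleftrightarrow> Sb \<subseteq> S_a C X \<Gamma> \<and>
     Y_a C X \<Gamma> \<subseteq> closure (convex hull (snd ` Sb))"

definition pv_self_bounded :: "(real^'m) set \<Rightarrow> (real^'n) set \<Rightarrow> (real^'n \<Rightarrow> real^'m) \<Rightarrow> bool" where
  "pv_self_bounded C X \<Gamma> \<longleftrightarrow> Y_a C X \<Gamma> \<noteq> UNIV \<and>
     (\<exists>P. finite P \<and> Y_a C X \<Gamma> \<subseteq> msum (convex hull P) (recc (closure (Y_a C X \<Gamma>))))"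

definition pv_fin_eps_solution :: "ereal \<Rightarrow> (real^'m) set \<Rightarrow> (real^'n) set \<Rightarrow> (real^'n \<Rightarrow> real^'m)
    \<Rightarrow> real \<Rightarrow> ((real^'n) \<times> (real^'m)) set \<Rightarrow> bool" where
  "pv_fin_eps_solution p C X \<Gamma> e Sb \<longleftrightarrow> pv_self_bounded C X \<Gamma> \<and>
     Sb \<noteq> {} \<and> finite Sb \<and> Sb \<subseteq> S_a C X \<Gamma> \<and>
     Y_a C X \<Gamma> \<subseteq> msum (msum (convex hull (snd ` Sb)) (recc (closure (Y_a C X \<Gamma>)))) (pball p e)"

end

theory Submission
  imports Defs
begin

lemma Ya_eq: "Y_a C X \<Gamma> = msum (\<Gamma> ` X) C"
proof
  show "Y_a C X \<Gamma> \<subseteq> msum (\<Gamma> ` X) C"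
  proof
    fix z assume "z \<in> Y_a C X \<Gamma>"
    then obtain x where "x \<in> X" "z \<in> msum {\<Gamma> x} C" unfolding Y_a_def S_a_def by auto
    then obtain b where "b \<in> C" "z = \<Gamma> x + b" unfolding msum_def by blast
    thus "z \<in> msum (\<Gamma> ` X) C" using \<open>x \<in> X\<close> unfolding msum_def by blast
  qed
  show "msum (\<Gamma> ` X) C \<subseteq> Y_a C X \<Gamma>"
  proof
    fix z assume "z \<in> msum (\<Gamma> ` X) C"
    then obtain x b where xb: "x \<in> X" "b \<in> C" "z = \<Gamma> x + b" unfolding msum_def by blast
    hence "(x, z) \<in> S_a C X \<Gamma>" unfolding S_a_def msum_def by blast
    thus "z \<in> Y_a C X \<Gamma>" unfolding Y_a_def by force
  qed
qed

lemma cl_Ya: "closure (Y_a C X \<Gamma>) = upper_image C X \<Gamma>"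
  by (simp add: Ya_eq upper_image_def)

lemma msum_sing: "x \<in> msum {q} C \<longleftrightarrow> x - q \<in> C"
proof
  assume "x \<in> msum {q} C" thus "x - q \<in> C" unfolding msum_def by auto
next
  assume "x - q \<in> C"
  moreover have "x = q + (x - q)" by simp
  ultimately show "x \<in> msum {q} C" unfolding msum_def by blast
qed

lemma cone_zero: "convex_cone C \<Longrightarrow> 0 \<in> C"
  by (rule convex_cone_contains_0)

lemma recc_G:
  assumes cc: "convex_cone C"
  shows "closure C \<subseteq> recc (upper_image C X \<Gamma>)"
proof
  fix y assume y: "y \<in> closure C"
  let ?A = "msum (\<Gamma> ` X) C"
  have step: "x + w \<in> closure ?A" if "x \<in> closure ?A" "w \<in> C" for x w
  proof -
    have "(+) w ` ?A \<subseteq> ?A"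
    proof
      fix z assume "z \<in> (+) w ` ?A"
      then obtain a b where ab: "a \<in> \<Gamma> ` X" "b \<in> C" "z = w + (a + b)"
        unfolding msum_def by blast
      have "w + b \<in> C" using convex_cone_add[OF cc that(2) ab(2)] .
      moreover have "z = a + (w + b)" using ab(3) by (simp add: algebra_simps)
      ultimately show "z \<in> ?A" using ab(1) unfolding msum_def by blast
    qed
    hence "closure ((+) w ` ?A) \<subseteq> closure ?A" by (rule closure_mono)
    moreover have "w + x \<in> (+) w ` closure ?A" using that(1) by blast
    ultimately have "w + x \<in> closure ?A" by (simp add: closure_translation[symmetric]) blast
    thus ?thesis by (simp add: add.commute)
  qed
  show "y \<in> recc (upper_image C X \<Gamma>)"
    unfolding recc_def upper_image_def
  proof (intro CollectI ballI allI impI)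
    fix x and l :: real assume x: "x \<in> closure ?A" and l: "0 \<le> l"
    have "closed ((\<lambda>v. x + l *\<^sub>R v) -` closure ?A)"
      by (intro continuous_closed_vimage continuous_intros) auto
    hence cl: "closed {v. x + l *\<^sub>R v \<in> closure ?A}" by (simp add: vimage_def)
    have "C \<subseteq> {v. x + l *\<^sub>R v \<in> closure ?A}"
    proof
      fix v assume "v \<in> C"
      hence "l *\<^sub>R v \<in> C" using cc l conic_mul unfolding convex_cone_def by blast
      thus "v \<in> {v. x + l *\<^sub>R v \<in> closure ?A}" using step x by blast
    qed
    hence "closure C \<subseteq> {v. x + l *\<^sub>R v \<in> closure ?A}"
      using cl by (rule closure_minimal)
    thus "x + l *\<^sub>R y \<in> closure ?A" using y by blast
  qed
qed

lemma G_ne: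
  assumes "convex_cone C" "X \<noteq> {}" shows "upper_image C X \<Gamma> \<noteq> {}"
proof -
  obtain x where "x \<in> X" using assms by blast
  hence "\<Gamma> x + 0 \<in> msum (\<Gamma> ` X) C" using cone_zero[OF assms(1)] unfolding msum_def by blast
  thus ?thesis unfolding upper_image_def using closure_subset by blast
qed

lemma aux_inv:
  fixes y :: "'a::real_vector"
  assumes "(s::real) \<noteq> 0"
  shows "inverse s *\<^sub>R (x + s *\<^sub>R y - q) = inverse s *\<^sub>R (x - q) + y"
proof -
  have "inverse s *\<^sub>R (x + s *\<^sub>R y - q) = inverse s *\<^sub>R (x - q) + (inverse s * s) *\<^sub>R y"
    by (simp add: scaleR_add_right scaleR_diff_right algebra_simps)
  also have "inverse s * s = 1" using assms by simp
  finally show ?thesis by simp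
qed

lemma recc_bounded:
  assumes cc: "convex_cone C" and Xne: "X \<noteq> {}"
    and b: "upper_image C X \<Gamma> \<subseteq> msum {q} C"
  shows "recc (upper_image C X \<Gamma>) \<subseteq> closure C"
proof
  fix y assume y: "y \<in> recc (upper_image C X \<Gamma>)"
  obtain x where x: "x \<in> upper_image C X \<Gamma>" using G_ne[OF cc Xne] by blast
  define f where "f n = inverse (real (Suc n)) *\<^sub>R (x - q) + y" for n
  have "f n \<in> C" for n
  proof -
    have "x + real (Suc n) *\<^sub>R y \<in> upper_image C X \<Gamma>" using y x unfolding recc_def by auto
    hence "x + real (Suc n) *\<^sub>R y - q \<in> C" using b msum_sing by blast
    moreover have "conic C" using cc by (simp add: convex_cone_def)
    ultimately have "inverse (real (Suc n)) *\<^sub>R (x + real (Suc n) *\<^sub>R y - q) \<in> C"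
      by (intro conic_mul) auto
    moreover have "inverse (real (Suc n)) *\<^sub>R (x + real (Suc n) *\<^sub>R y - q) = f n"
      unfolding f_def by (rule aux_inv) simp
    ultimately show "f n \<in> C" by simp
  qed
  moreover have "f \<longlonglongrightarrow> 0 + y"
  proof -
    have "(\<lambda>n. inverse (real (Suc n)) *\<^sub>R (x - q)) \<longlonglongrightarrow> 0 *\<^sub>R (x - q)"
      by (rule tendsto_scaleR[OF LIMSEQ_inverse_real_of_nat tendsto_const])
    hence "(\<lambda>n. inverse (real (Suc n)) *\<^sub>R (x - q)) \<longlonglongrightarrow> 0" by simp
    thus ?thesis unfolding f_def by (intro tendsto_add tendsto_const)
  qed
  ultimately show "y \<in> closure C" unfolding closure_sequential by auto
qed

lemma pnorm_scale:
  assumes p: "p \<ge> 1"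
  shows "pnorm p (a *\<^sub>R y) = \<bar>a\<bar> * pnorm p y"
proof (cases "p = \<infinity>")
  case True
  have "Max (range (\<lambda>i. \<bar>(a *\<^sub>R y) $ i\<bar>)) = Max ((\<lambda>t. \<bar>a\<bar> * t) ` range (\<lambda>i. \<bar>y $ i\<bar>))"
    by (simp add: image_image abs_mult)
  also have "\<dots> = \<bar>a\<bar> * Max (range (\<lambda>i. \<bar>y $ i\<bar>))"
    by (rule mono_Max_commute[symmetric]) (auto simp: mono_def mult_left_mono)
  finally show ?thesis using True by (simp add: pnorm_def)
next
  case False
  define r where "r = real_of_ereal p"
  have r: "r \<ge> 1" using p False unfolding r_def
    by (cases p) auto
  have pn: "pnorm p z = (\<Sum>i\<in>UNIV. \<bar>z $ i\<bar> powr r) powr (1 / r)" for z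
    using False unfolding pnorm_def r_def by (simp only: if_False)
  have se: "(\<Sum>i\<in>UNIV. \<bar>(a *\<^sub>R y) $ i\<bar> powr r) = \<bar>a\<bar> powr r * (\<Sum>i\<in>UNIV. \<bar>y $ i\<bar> powr r)"
    by (simp add: abs_mult powr_mult sum_distrib_left)
  have "pnorm p (a *\<^sub>R y) = (\<bar>a\<bar> powr r * (\<Sum>i\<in>UNIV. \<bar>y $ i\<bar> powr r)) powr (1 / r)"
    unfolding pn se ..
  also have "\<dots> = (\<bar>a\<bar> powr r) powr (1/r) * (\<Sum>i\<in>UNIV. \<bar>y $ i\<bar> powr r) powr (1 / r)"
    by (rule powr_mult; simp add: sum_nonneg)
  also have "(\<bar>a\<bar> powr r) powr (1/r) = \<bar>a\<bar>"
    using r by (simp add: powr_powr)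
  finally show ?thesis unfolding pn .
qed

lemma msum_shift:
  assumes "R \<subseteq> R'" "d \<in> P"
  shows "msum (msum H R) {d} \<subseteq> msum (msum H R') P"
  using assms unfolding msum_def by blast

theorem mainTheorem11:
  fixes C :: "(real^'m) set" and X :: "(real^'n) set" and \<Gamma> :: "real^'n \<Rightarrow> real^'m"
    and p :: ereal and c :: "real^'m" and e :: real
  assumes cone: "ordering_cone C"
    and Xconv: "convex X" and Xne: "X \<noteq> {}"
    and Gconv: "C_convex C X \<Gamma>"
    and p: "p \<ge> 1"
    and c: "c \<in> interior C" "pnorm p c = 1"
    and e: "e > 0"
  shows "(\<forall>Xb. infimizer C X \<Gamma> Xb \<longrightarrow>
            pv_solution C X \<Gamma> {(x, y). x \<in> Xb \<and> y \<in> msum {\<Gamma> x} C})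
       \<and> (cvop_self_bounded C X \<Gamma> \<longrightarrow>
            pv_self_bounded C X \<Gamma>
            \<and> (cvop_bounded C X \<Gamma> \<longrightarrow> recc (closure (Y_a C X \<Gamma>)) = closure C))
       \<and> (\<forall>Xb. (cvop_bounded C X \<Gamma> \<and> fin_eps_infimizer_b C X \<Gamma> c e Xb)
               \<or> (cvop_self_bounded C X \<Gamma> \<and> fin_eps_infimizer_sb C X \<Gamma> c e Xb) \<longrightarrow>
            pv_fin_eps_solution p C X \<Gamma> e ((\<lambda>x. (x, \<Gamma> x)) ` Xb))"
proof -
  have cc: "convex_cone C" and CU: "C \<noteq> UNIV" using cone unfolding ordering_cone_def by auto
  have C0: "0 \<in> C" by (rule cone_zero[OF cc])
  let ?G = "upper_image C X \<Gamma>"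
  have YG: "Y_a C X \<Gamma> \<subseteq> ?G" using cl_Ya closure_subset by metis
  have rG: "recc (closure (Y_a C X \<Gamma>)) = recc ?G" by (simp add: cl_Ya)
  have CrG: "C \<subseteq> recc ?G" using recc_G[OF cc] closure_subset by blast
  have bnd_sb: "pv_self_bounded C X \<Gamma>" if bd: "cvop_bounded C X \<Gamma> \<or> cvop_self_bounded C X \<Gamma>"
  proof -
    obtain q where q: "?G \<subseteq> msum {q} (recc ?G)" and ne: "Y_a C X \<Gamma> \<noteq> UNIV"
    proof (cases "cvop_self_bounded C X \<Gamma>")
      case True thus ?thesis using that YG unfolding cvop_self_bounded_def by blast
    next
      case False
      then obtain q where q: "?G \<subseteq> msum {q} C" using bd unfolding cvop_bounded_def by blast
      have "?G \<subseteq> msum {q} (recc ?G)" using q CrG unfolding msum_def by blast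
      moreover have "Y_a C X \<Gamma> \<noteq> UNIV"
      proof
        assume "Y_a C X \<Gamma> = UNIV"
        hence "\<forall>z. z + q \<in> msum {q} C" using YG q by blast
        hence "\<forall>z. z \<in> C" unfolding msum_sing by simp
        thus False using CU by blast
      qed
      ultimately show ?thesis using that by blast
    qed
    show ?thesis unfolding pv_self_bounded_def rG
      using ne q YG by (intro conjI exI[of _ "{q}"]) auto
  qed
  have P1: "\<forall>Xb. infimizer C X \<Gamma> Xb \<longrightarrow>
            pv_solution C X \<Gamma> {(x, y). x \<in> Xb \<and> y \<in> msum {\<Gamma> x} C}"
  proof (intro allI impI)
    fix Xb assume I: "infimizer C X \<Gamma> Xb"
    have sn: "snd ` {(x, y). x \<in> Xb \<and> y \<in> msum {\<Gamma> x} C} = msum (\<Gamma> ` Xb) C"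
    proof
      show "snd ` {(x, y). x \<in> Xb \<and> y \<in> msum {\<Gamma> x} C} \<subseteq> msum (\<Gamma> ` Xb) C"
      proof
        fix z assume "z \<in> snd ` {(x, y). x \<in> Xb \<and> y \<in> msum {\<Gamma> x} C}"
        then obtain x where "x \<in> Xb" "z \<in> msum {\<Gamma> x} C" by auto
        then obtain b where "b \<in> C" "z = \<Gamma> x + b" unfolding msum_def by blast
        thus "z \<in> msum (\<Gamma> ` Xb) C" using \<open>x \<in> Xb\<close> unfolding msum_def by blast
      qed
      show "msum (\<Gamma> ` Xb) C \<subseteq> snd ` {(x, y). x \<in> Xb \<and> y \<in> msum {\<Gamma> x} C}"
      proof
        fix z assume "z \<in> msum (\<Gamma> ` Xb) C"
        then obtain x b where xb: "x \<in> Xb" "b \<in> C" "z = \<Gamma> x + b" unfolding msum_def by blast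
        hence "(x, z) \<in> {(x, y). x \<in> Xb \<and> y \<in> msum {\<Gamma> x} C}" unfolding msum_def by blast
        thus "z \<in> snd ` {(x, y). x \<in> Xb \<and> y \<in> msum {\<Gamma> x} C}" by force
      qed
    qed
    show "pv_solution C X \<Gamma> {(x, y). x \<in> Xb \<and> y \<in> msum {\<Gamma> x} C}"
      unfolding pv_solution_def sn using I YG unfolding infimizer_def S_a_def by auto
  qed
  have P2: "cvop_self_bounded C X \<Gamma> \<longrightarrow>
            pv_self_bounded C X \<Gamma>
            \<and> (cvop_bounded C X \<Gamma> \<longrightarrow> recc (closure (Y_a C X \<Gamma>)) = closure C)"
  proof (intro impI conjI)
    assume "cvop_self_bounded C X \<Gamma>" thus "pv_self_bounded C X \<Gamma>" using bnd_sb by blast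
  next
    assume "cvop_bounded C X \<Gamma>"
    then obtain q where "?G \<subseteq> msum {q} C" unfolding cvop_bounded_def by blast
    thus "recc (closure (Y_a C X \<Gamma>)) = closure C"
      using recc_bounded[OF cc Xne] recc_G[OF cc] rG by blast
  qed
  have dP: "- e *\<^sub>R c \<in> pball p e"
    unfolding pball_def using pnorm_scale[OF p, of "- e" c] c e by simp
  have P3: "\<forall>Xb. (cvop_bounded C X \<Gamma> \<and> fin_eps_infimizer_b C X \<Gamma> c e Xb)
               \<or> (cvop_self_bounded C X \<Gamma> \<and> fin_eps_infimizer_sb C X \<Gamma> c e Xb) \<longrightarrow>
            pv_fin_eps_solution p C X \<Gamma> e ((\<lambda>x. (x, \<Gamma> x)) ` Xb)"
  proof (intro allI impI)
    fix Xb assume H: "(cvop_bounded C X \<Gamma> \<and> fin_eps_infimizer_b C X \<Gamma> c e Xb)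
               \<or> (cvop_self_bounded C X \<Gamma> \<and> fin_eps_infimizer_sb C X \<Gamma> c e Xb)"
    have sb: "pv_self_bounded C X \<Gamma>" using H bnd_sb by blast
    have basic: "Xb \<noteq> {} \<and> finite Xb \<and> Xb \<subseteq> X" using H
      unfolding fin_eps_infimizer_b_def fin_eps_infimizer_sb_def by blast
    have sn: "snd ` (\<lambda>x. (x, \<Gamma> x)) ` Xb = \<Gamma> ` Xb" by (simp add: image_image)
    have sub: "(\<lambda>x. (x, \<Gamma> x)) ` Xb \<subseteq> S_a C X \<Gamma>"
      using basic C0 unfolding S_a_def msum_def by force
    have cov: "?G \<subseteq> msum (msum (convex hull (\<Gamma> ` Xb)) (recc ?G)) (pball p e)"
    proof (cases "cvop_bounded C X \<Gamma> \<and> fin_eps_infimizer_b C X \<Gamma> c e Xb")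
      case True
      hence "?G \<subseteq> msum (msum (convex hull (\<Gamma> ` Xb)) C) {- e *\<^sub>R c}"
        unfolding fin_eps_infimizer_b_def by blast
      thus ?thesis using msum_shift[OF CrG dP] by blast
    next
      case False
      hence "?G \<subseteq> msum (msum (convex hull (\<Gamma> ` Xb)) (recc ?G)) {- e *\<^sub>R c}"
        using H unfolding fin_eps_infimizer_sb_def by blast
      thus ?thesis using msum_shift[OF order_refl dP] by blast
    qed
    show "pv_fin_eps_solution p C X \<Gamma> e ((\<lambda>x. (x, \<Gamma> x)) ` Xb)"
      unfolding pv_fin_eps_solution_def sn rG using sb basic sub cov YG by auto
  qed
  show ?thesis by (intro conjI P1 P2 P3)
qed

end
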